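(* Let $n\ge 6$ be an even integer not divisible by $4$, and let $A=[a_{ij}]$ be the $n\times n$ matrix produced by the singly even construction described in the context. Then $\sum_{i=1}^n a_{ii} = \frac{n(n^2+1)}{2}$ and $\sum_{i=1}^n a_{i,n-i+1} = \frac{n(n^2+1)}{2}$.
   Context: Siamese method for odd $p$: produce a $p\times p$ matrix $S$ containing $1,\dots,p^2$ by placing $1$ at position $(1,\frac{p+1}{2})$, and for $k=1,\dots,p^2-1$, if $k$ is at $(i,j)$, place $k+1$ at the cell one row up and one column right, wrapping cyclically (row $0$ means row $p$, column $p+1$ means column $1$), unless that cell is already occupied or $(i,j)=(1,p)$, in which case place $k+1$ at $(i+1,j)$. Singly even construction: let $p=n/2$ (odd), $m=\frac{n-2}{4}$, $q=\frac{n-6}{4}$. For $\ell=1,\dots,4$ let $A^\ell = S + (\ell-1)\frac{n^2}{4}J$ with $J$ the all-ones $p\times p$ matrix, and form $\begin{bmatrix} A^1 & A^3\\ A^4 & A^2\end{bmatrix}$. Let $T = \{(i,j): i\in\{1,\dots,m\}\cup\{m+2,\dots,p\},\ j\in\{1,\dots,m\}\}\cup\{(m+1,j): j\in\{m+1,\dots,2m\}\}$. Then: (1) for every $(i,j)\in T$ exchange $A^1_{ij}$ and $A^4_{ij}$; (2) for every $i\in\{1,\dots,p\}$ and $j\in\{p-q+1,\dots,p\}$ exchange $A^3_{ij}$ and $A^2_{ij}$. The resulting $n\times n$ matrix is $A$. *)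

theory Defs
  imports Main
begin

text \<open>Siamese method for odd p. Rows and columns are 1-based.
  siamese_positions p k is the list of the cells holding 1, ..., k
  (entry number t-1 of the list is the cell of t).\<close>

fun siamese_positions :: "nat \<Rightarrow> nat \<Rightarrow> (nat \<times> nat) list" where
  "siamese_positions p 0 = []"
| "siamese_positions p (Suc k) =
     (let ps = siamese_positions p k in
      if k = 0 then [(1, (p + 1) div 2)]
      else (let (i, j) = last ps;
                c = (if i = 1 then p else i - 1, if j = p then 1 else j + 1)
            in if c \<in> set ps \<or> (i, j) = (1, p) then ps @ [(i + 1, j)] else ps @ [c]))"

definition siamese :: "nat \<Rightarrow> nat \<Rightarrow> nat \<Rightarrow> nat" where
  "siamese p i j =
     (THE k. 1 \<le> k \<and> k \<le> p\<^sup>2 \<and> siamese_positions p (p\<^sup>2) ! (k - 1) = (i, j))"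

definition swapT :: "nat \<Rightarrow> (nat \<times> nat) set" where
  "swapT n = (let p = n div 2; m = (n - 2) div 4 in
     {(i, j). (i \<in> {1..m} \<union> {m+2..p}) \<and> j \<in> {1..m}} \<union> {(m + 1, j) | j. j \<in> {m+1..2*m}})"

definition blockA :: "nat \<Rightarrow> nat \<Rightarrow> nat \<Rightarrow> nat \<Rightarrow> nat" where
  "blockA n l i j = siamese (n div 2) i j + (l - 1) * (n\<^sup>2 div 4)"

text \<open>The singly even magic square A (entries (i,j), 1 \<le> i,j \<le> n), built from
  [A1 A3; A4 A2] with the two exchanges.\<close>
definition singly_even :: "nat \<Rightarrow> nat \<Rightarrow> nat \<Rightarrow> nat" where
  "singly_even n i j =
    (let p = n div 2; q = (n - 6) div 4; T = swapT n in
     if i \<le> p \<and> j \<le> p then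
       (if (i, j) \<in> T then blockA n 4 i j else blockA n 1 i j)
     else if i \<le> p then
       (if p - q + 1 \<le> j - p then blockA n 2 i (j - p) else blockA n 3 i (j - p))
     else if j \<le> p then
       (if (i - p, j) \<in> T then blockA n 1 (i - p) j else blockA n 4 (i - p) j)
     else
       (if p - q + 1 \<le> j - p then blockA n 3 (i - p) (j - p) else blockA n 2 (i - p) (j - p)))"

end

theory Submission imports Defs begin

definition Rm :: "nat \<Rightarrow> int \<Rightarrow> nat" where
  "Rm p x = nat (x mod int p) + 1"

definition posAB :: "nat \<Rightarrow> int \<Rightarrow> int \<Rightarrow> nat \<times> nat" where
  "posAB p a b = (Rm p (2*a - b), Rm p (int ((p - 1) div 2) - a + b))"

definition pos :: "nat \<Rightarrow> nat \<Rightarrow> nat \<times> nat" where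
  "pos p k = posAB p (int (k div p)) (int (k mod p))"

lemma dvd_small: "(P::int) dvd x - y \<Longrightarrow> 0 \<le> x \<Longrightarrow> x < P \<Longrightarrow> 0 \<le> y \<Longrightarrow> y < P \<Longrightarrow> x = y"
  by (metis mod_eq_dvd_iff mod_pos_pos_trivial)

lemma Rm_eq: assumes "p > 0" shows "Rm p x = Rm p y \<longleftrightarrow> int p dvd x - y"
proof -
  have "0 \<le> x mod int p" "0 \<le> y mod int p" using assms by auto
  then show ?thesis unfolding Rm_def by (auto simp: mod_eq_dvd_iff[symmetric] nat_eq_iff2) 
qed

lemma mod_char: "(0::int) \<le> t \<Longrightarrow> t < P \<Longrightarrow> P dvd (y - t) \<Longrightarrow> y mod P = t"
  by (metis mod_eq_dvd_iff mod_pos_pos_trivial)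

lemma Rm_pred: assumes "p > 0" shows "(if Rm p x = 1 then p else Rm p x - 1) = Rm p (x - 1)"
proof -
  define s where "s = x mod int p"
  have sb: "0 \<le> s" "s < int p" using assms by (simp_all add: s_def)
  have d: "int p dvd x - s" by (simp add: s_def mod_eq_dvd_iff[symmetric])
  have "(x - 1) mod int p = (if s = 0 then int p - 1 else s - 1)"
  proof (rule mod_char)
    have "int p dvd (x - s) - int p" using d by (simp add: dvd_diff)
    with d show "int p dvd x - 1 - (if s = 0 then int p - 1 else s - 1)"
      by (cases "s = 0") (simp_all add: algebra_simps)
    show "0 \<le> (if s = 0 then int p - 1 else s - 1)"
       "(if s = 0 then int p - 1 else s - 1) < int p" using sb assms by auto
  qed
  then show ?thesis unfolding Rm_def s_def[symmetric] using assms sb by auto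
qed

lemma Rm_succ: assumes "p > 0" shows "(if Rm p x = p then 1 else Rm p x + 1) = Rm p (x + 1)"
proof -
  define s where "s = x mod int p"
  have sb: "0 \<le> s" "s < int p" using assms by (simp_all add: s_def)
  have d: "int p dvd x - s" by (simp add: s_def mod_eq_dvd_iff[symmetric])
  have "(x + 1) mod int p = (if s = int p - 1 then 0 else s + 1)"
  proof (rule mod_char)
    have "int p dvd (x - s) + int p" using d by (simp add: dvd_add)
    with d show "int p dvd x + 1 - (if s = int p - 1 then 0 else s + 1)"
      by (cases "s = int p - 1") (simp_all add: algebra_simps)
    show "0 \<le> (if s = int p - 1 then 0 else s + 1)"
       "(if s = int p - 1 then 0 else s + 1) < int p" using sb assms by auto
  qed
  then show ?thesis unfolding Rm_def s_def[symmetric] using assms sb by (auto simp: nat_add_distrib)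
qed

lemma pos_inj:
  assumes "p > 0" "k < p^2" "k' < p^2" "pos p k = pos p k'"
  shows "k = k'"
proof -
  define a where "a = int (k div p)"
  define b where "b = int (k mod p)"
  define a' where "a' = int (k' div p)"
  define b' where "b' = int (k' mod p)"
  define c where "c = int ((p - 1) div 2)"
  have ab: "0 \<le> a" "a < int p" "0 \<le> b" "b < int p" "0 \<le> a'" "a' < int p" "0 \<le> b'" "b' < int p"
    using assms by (auto simp: a_def b_def a'_def b'_def power2_eq_square less_mult_imp_div_less)
  have "pos p k = posAB p a b" "pos p k' = posAB p a' b'" by (simp_all add: pos_def a_def b_def a'_def b'_def c_def)
  then have "Rm p (2*a - b) = Rm p (2*a' - b')" "Rm p (c - a + b) = Rm p (c - a' + b')"
    using assms by (auto simp: posAB_def c_def)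
  then have d1: "int p dvd (2*a - b) - (2*a' - b')" and d2: "int p dvd (c - a + b) - (c - a' + b')"
    using assms Rm_eq by blast+
  have "int p dvd ((2*a - b) - (2*a' - b')) + ((c - a + b) - (c - a' + b'))"
    using d1 d2 by (rule dvd_add)
  then have "int p dvd a - a'" by (simp add: algebra_simps)
  then have "a = a'" using ab dvd_small by blast
  with d2 have "int p dvd b - b'" by (simp add: algebra_simps)
  then have "b = b'" using ab dvd_small by blast
  with \<open>a = a'\<close> show ?thesis unfolding a_def a'_def b_def b'_def
    by (metis div_mult_mod_eq of_nat_eq_iff)
qed

lemma pos_corner:
  assumes "odd p"
  shows "pos p (((p - 1) div 2) * p + (p - 1)) = (1, p)"
proof -
  have p0: "p > 0" using assms by presburger
  define c0 where "c0 = (p - 1) div 2"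
  have c0: "2 * c0 = p - 1" using assms unfolding c0_def by presburger
  have r: "p - 1 < p" using p0 by simp
  have dv: "(c0 * p + (p - 1)) div p = c0" "(c0 * p + (p - 1)) mod p = p - 1"
    using r by (simp_all only: div_mult_self3 mod_mult_self3 div_less mod_less)
  have "Rm p (2 * int c0 - int (p - 1)) = 1" using c0 p0 by (simp add: Rm_def of_nat_diff[symmetric])
  moreover have "Rm p (int c0 - int c0 + int (p - 1)) = p" using p0 by (simp add: Rm_def zmod_minus1 of_nat_diff)
  ultimately show ?thesis unfolding pos_def posAB_def dv c0_def[symmetric] by simp
qed

lemma positions:
  assumes "odd p"
  shows "k \<le> p^2 \<Longrightarrow> siamese_positions p k = map (pos p) [0..<k]"
proof (induction k)
  case 0
  then show ?case by simp
next
  case (Suc k)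
  have p0: "p > 0" using assms by presburger
  define c0 where "c0 = (p - 1) div 2"
  have c0: "2 * c0 = p - 1" using assms unfolding c0_def by presburger
  have IH: "siamese_positions p k = map (pos p) [0..<k]" using Suc by simp
  show ?case
  proof (cases "k = 0")
    case True
    have "(p + 1) div 2 = c0 + 1" using c0 assms by presburger
    moreover have "c0 < p" using c0 p0 by simp
    ultimately show ?thesis using True p0 by (simp add: pos_def posAB_def Rm_def c0_def)
  next
    case False
    define ps where "ps = map (pos p) [0..<k]"
    define a where "a = (k - 1) div p"
    define b where "b = (k - 1) mod p"
    have kab: "k - 1 = a * p + b" unfolding a_def b_def by simp
    have bp: "b < p" using p0 unfolding b_def by simp
    define i where "i = Rm p (2 * int a - int b)"
    define j where "j = Rm p (int c0 - int a + int b)"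
    have lp: "last ps = pos p (k - 1)" using False unfolding ps_def by (simp add: last_map)
    then have lastps: "last ps = (i, j)" unfolding i_def j_def a_def b_def c0_def
      by (simp add: pos_def posAB_def)
    define c where "c = (Rm p (2 * int a - int b - 1), Rm p (int c0 - int a + int b + 1))"
    have cc: "(if i = 1 then p else i - 1, if j = p then 1 else j + 1) = c"
      unfolding c_def i_def j_def using Rm_pred[OF p0] Rm_succ[OF p0] by simp
    have step: "siamese_positions p (Suc k) =
       (if c \<in> set ps \<or> (i, j) = (1, p) then ps @ [(i + 1, j)] else ps @ [c])"
      using False IH lastps cc by (simp add: Let_def ps_def)
    show ?thesis
    proof (cases "b + 1 < p")
      case True
      have kk: "k = a * p + (b + 1)" using kab False by simp
      have "k div p = a" "k mod p = b + 1" unfolding kk using True p0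
        by (simp_all only: div_mult_self3 mod_mult_self3 div_less mod_less)
      then have pk: "pos p k = c" unfolding pos_def posAB_def c_def c0_def by (simp add: algebra_simps)
      have cn: "c \<notin> set ps"
      proof
        assume "c \<in> set ps"
        then obtain t where "t < k" "pos p t = pos p k" unfolding ps_def pk[symmetric] by auto
        then show False using pos_inj[OF p0, of t k] Suc.prems by simp
      qed
      moreover have nc: "(i, j) \<noteq> (1, p)"
      proof
        assume "(i, j) = (1, p)"
        then have "pos p (k - 1) = pos p (c0 * p + (p - 1))"
          using pos_corner[OF assms] lastps lp unfolding c0_def by simp
        moreover have "c0 * p + (p - 1) < p^2"
        proof -
          have "c0 + 1 \<le> p" using c0 p0 by simp
          then have "(c0 + 1) * p \<le> p * p" by (rule mult_le_mono1)
          then show ?thesis using p0 by (simp add: power2_eq_square)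
        qed
        ultimately have "k - 1 = c0 * p + (p - 1)" using pos_inj[OF p0, of "k - 1"] Suc.prems by simp
        then have "b = (c0 * p + (p - 1)) mod p" unfolding b_def by simp
        also have "\<dots> = p - 1" using p0 by (simp only: mod_mult_self3 mod_less diff_less zero_less_one)
        finally have "b = p - 1" .
        then show False using True p0 by simp
      qed
      have "siamese_positions p (Suc k) = ps @ [c]" using step cn nc by presburger
      then show ?thesis using pk by (simp add: ps_def)
    next
      case False
      then have bb: "b = p - 1" using bp by simp
      have kk: "k = (a + 1) * p" using kab \<open>k \<noteq> 0\<close> bb p0 by (simp add: algebra_simps)
      have "k < p * p" using Suc.prems by (simp add: power2_eq_square)
      then have "(a + 1) * p < p * p" using kk by simp
      then have ap: "a + 1 < p" by (metis mult_less_cancel2)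
      have "k div p = a + 1" "k mod p = 0" unfolding kk using p0 by auto
      then have pk: "pos p k = (Rm p (2 * int a + 2), Rm p (int c0 - int a - 1))"
        unfolding pos_def posAB_def c0_def by (simp add: algebra_simps)
      have "pos p (a * p) = c" using p0 bb unfolding pos_def posAB_def c_def c0_def
        by (simp add: Rm_eq of_nat_diff algebra_simps)
      moreover have "a * p < k" using kk p0 by simp
      ultimately have cin: "c \<in> set ps" unfolding ps_def by force
      have "siamese_positions p (Suc k) = ps @ [(i + 1, j)]" using step cin by presburger
      moreover have "j = Rm p (int c0 - int a - 1)" unfolding j_def bb using p0
        by (simp add: Rm_eq of_nat_diff algebra_simps)
      moreover have "i + 1 = Rm p (2 * int a + 2)"
      proof -
        have ii: "i = Rm p (2 * int a + 1)" unfolding i_def bb using p0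
          by (simp add: Rm_eq of_nat_diff algebra_simps)
        have "i \<noteq> p"
        proof
          assume "i = p"
          then have "Rm p (2 * int a + 1) = Rm p (-1)" using ii p0 by (simp add: Rm_def zmod_minus1)
          then have "int p dvd 2 * int a + 2" using p0 by (simp add: Rm_eq add.commute)
          then obtain e where e: "2 * int a + 2 = int p * e" by (auto simp: dvd_def)
          have "2 * int a + 2 < int p * 2" using ap by simp
          then have "int p * e < int p * 2" using e by linarith
          then have "e < 2" using p0 by (simp only: mult_less_cancel_left_pos of_nat_0_less_iff)
          moreover have "int p * 0 < int p * e" using e by simp
          then have "0 < e" using p0 by (simp only: mult_less_cancel_left_pos of_nat_0_less_iff)
          ultimately have "e = 1" by simp
          then show False using e assms by presburger
        qed
        then show ?thesis using Rm_succ[OF p0, of "2 * int a + 1"] ii by (simp add: add.assoc)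
      qed
      ultimately show ?thesis using pk by (simp add: ps_def)
    qed
  qed
qed


definition sv :: "nat \<Rightarrow> nat \<Rightarrow> nat \<Rightarrow> nat" where
  "sv p r c = p * nat ((int r + int c - int ((p - 1) div 2)) mod int p)
     + nat ((int r + 2 * int c - 2 * int ((p - 1) div 2)) mod int p) + 1"

lemma dvd_mod_self: "(P::int) dvd x mod P - x"
  by (simp add: mod_eq_dvd_iff[symmetric])

lemma siamese_val:
  assumes "odd p" "r < p" "c < p"
  shows "siamese p (r + 1) (c + 1) = sv p r c"
proof -
  have p0: "p > 0" using assms by presburger
  define c0 where "c0 = (p - 1) div 2"
  define x where "x = int r + int c - int c0"
  define y where "y = int r + 2 * int c - 2 * int c0"
  define A where "A = nat (x mod int p)"
  define B where "B = nat (y mod int p)"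
  have Ai: "int A = x mod int p" unfolding A_def using p0 by simp
  have Bi: "int B = y mod int p" unfolding B_def using p0 by simp
  have Ap: "A < p" "B < p" unfolding A_def B_def using p0
    by (simp_all add: nat_less_iff)
  define K where "K = A * p + B"
  have Kdm: "K div p = A" "K mod p = B" unfolding K_def using Ap p0
    by (simp_all only: div_mult_self3 mod_mult_self3 div_less mod_less)
  have Kp: "K < p^2"
  proof -
    have "A + 1 \<le> p" using Ap by simp
    then have "(A + 1) * p \<le> p * p" by (rule mult_le_mono1)
    then show ?thesis using Ap unfolding K_def by (simp add: power2_eq_square)
  qed
  have r1: "Rm p (2 * int A - int B) = r + 1"
  proof -
    have "int p dvd (2 * int A - int B) - int r"
    proof -
      have "(2 * int A - int B) - int r = 2 * (x mod int p - x) - (y mod int p - y)"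
        unfolding Ai Bi x_def y_def by (simp add: algebra_simps)
      then show ?thesis using dvd_mod_self[of "int p" x] dvd_mod_self[of "int p" y]
        by (metis dvd_diff dvd_mult)
    qed
    then have "Rm p (2 * int A - int B) = Rm p (int r)" using Rm_eq p0 by blast
    then show ?thesis using assms by (simp add: Rm_def)
  qed
  have c1: "Rm p (int c0 - int A + int B) = c + 1"
  proof -
    have "int p dvd (int c0 - int A + int B) - int c"
    proof -
      have "(int c0 - int A + int B) - int c = (y mod int p - y) - (x mod int p - x)"
        unfolding Ai Bi x_def y_def by (simp add: algebra_simps)
      then show ?thesis using dvd_mod_self[of "int p" x] dvd_mod_self[of "int p" y]
        by (metis dvd_diff)
    qed
    then have "Rm p (int c0 - int A + int B) = Rm p (int c)" using Rm_eq p0 by blast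
    then show ?thesis using assms by (simp add: Rm_def)
  qed
  have posK: "pos p K = (r + 1, c + 1)"
    unfolding pos_def posAB_def Kdm c0_def[symmetric] r1 c1 ..
  have L: "siamese_positions p (p^2) = map (pos p) [0..<p^2]" using positions[OF assms(1)] by simp
  have "siamese p (r + 1) (c + 1) = K + 1"
    unfolding siamese_def L
  proof (rule the_equality)
    show "1 \<le> K + 1 \<and> K + 1 \<le> p\<^sup>2 \<and> map (pos p) [0..<p\<^sup>2] ! (K + 1 - 1) = (r + 1, c + 1)"
      using Kp posK by simp
  next
    fix k assume h: "1 \<le> k \<and> k \<le> p\<^sup>2 \<and> map (pos p) [0..<p\<^sup>2] ! (k - 1) = (r + 1, c + 1)"
    then have "k - 1 < p^2" "pos p (k - 1) = pos p K" using posK by auto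
    then have "k - 1 = K" using pos_inj[OF p0 _ Kp] by simp
    moreover have "1 \<le> k" using h by blast
    ultimately show "k = K + 1" by linarith
  qed
  also have "\<dots> = sv p r c" unfolding sv_def K_def A_def B_def x_def y_def c0_def by simp
  finally show ?thesis .
qed


lemma dvd_zero_small: "(P::int) dvd d \<Longrightarrow> - P < d \<Longrightarrow> d < P \<Longrightarrow> d = 0"
proof (rule ccontr)
  assume h: "P dvd d" "- P < d" "d < P" "d \<noteq> 0"
  show False
  proof (cases "d > 0")
    case True
    then have "P \<le> d" using h zdvd_imp_le by blast
    then show False using h by simp
  next
    case False
    then have "- d > 0" using h by simp
    moreover have "P dvd - d" using h by simp
    ultimately have "P \<le> - d" using zdvd_imp_le by blast
    then show False using h by simp
  qed
qed

lemma pair_sum: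
  assumes "p > 0" and g: "\<And>t. g t + g (int p - 1 - t) = int p - 1"
  shows "2 * (\<Sum>t<p. g (int t) mod int p) = int p * (int p - 1)"
proof -
  define F where "F t = g (int t) mod int p" for t
  have pr: "F t + F (p - Suc t) = int p - 1" if "t < p" for t
  proof -
    have e: "int (p - Suc t) = int p - 1 - int t" using that by simp
    have b: "0 \<le> F t" "F t < int p" "0 \<le> F (p - Suc t)" "F (p - Suc t) < int p"
      unfolding F_def using assms(1) by simp_all
    have "int p dvd (F t - g (int t)) + (F (p - Suc t) - g (int p - 1 - int t))"
      unfolding F_def e by (simp add: dvd_mod_self dvd_add)
    moreover have "(F t - g (int t)) + (F (p - Suc t) - g (int p - 1 - int t)) = (F t + F (p - Suc t)) - (int p - 1)"
      using g[of "int t"] by (simp add: algebra_simps)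
    ultimately have "int p dvd (F t + F (p - Suc t)) - (int p - 1)" by simp
    then have "(F t + F (p - Suc t)) - (int p - 1) = 0"
      using b by (intro dvd_zero_small) auto
    then show ?thesis by simp
  qed
  have "(\<Sum>t<p. F t) = (\<Sum>t<p. F (p - Suc t))" by (rule sum.nat_diff_reindex[symmetric])
  then have "2 * (\<Sum>t<p. F t) = (\<Sum>t<p. F t + F (p - Suc t))" by (simp add: sum.distrib)
  also have "\<dots> = (\<Sum>t<p. int p - 1)" using pr by (intro sum.cong) auto
  finally show ?thesis unfolding F_def by simp
qed

lemma sv_int: "p > 0 \<Longrightarrow> int (sv p r c) = int p * ((int r + int c - int ((p - 1) div 2)) mod int p)
     + ((int r + 2 * int c - 2 * int ((p - 1) div 2)) mod int p) + 1"
  unfolding sv_def by simp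

lemma sv_diag:
  assumes "odd p"
  shows "2 * (\<Sum>t<p. sv p t t) = p * (p^2 + 1)"
proof -
  have p0: "p > 0" using assms by presburger
  define c0 where "c0 = int ((p - 1) div 2)"
  have c0: "2 * c0 = int p - 1" unfolding c0_def using assms by presburger
  have s1: "2 * (\<Sum>t<p. (\<lambda>t. 2 * t - c0) (int t) mod int p) = int p * (int p - 1)"
    by (rule pair_sum[OF p0]) (use c0 in simp)
  have s2: "2 * (\<Sum>t<p. (\<lambda>t. 3 * t - 2 * c0) (int t) mod int p) = int p * (int p - 1)"
    by (rule pair_sum[OF p0]) (use c0 in simp)
  have "int (2 * (\<Sum>t<p. sv p t t)) = 2 * (\<Sum>t<p. int p * ((2 * int t - c0) mod int p)
       + ((3 * int t - 2 * c0) mod int p) + 1)"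
    using p0 by (simp add: sv_int c0_def algebra_simps)
  also have "\<dots> = int p * (2 * (\<Sum>t<p. (2 * int t - c0) mod int p))
       + 2 * (\<Sum>t<p. (3 * int t - 2 * c0) mod int p) + 2 * int p"
    by (simp add: sum.distrib sum_distrib_left algebra_simps)
  also have "\<dots> = int (p * (p^2 + 1))" unfolding s1 s2 by (simp add: algebra_simps power2_eq_square)
  finally show ?thesis by (simp only: of_nat_eq_iff)
qed

lemma sv_anti:
  assumes "odd p"
  shows "2 * (\<Sum>t<p. sv p t (p - 1 - t)) = p * (p^2 + 1)"
proof -
  have p0: "p > 0" using assms by presburger
  define c0 where "c0 = int ((p - 1) div 2)"
  have c0: "2 * c0 = int p - 1" unfolding c0_def using assms by presburger
  have s1: "2 * (\<Sum>t<p. (\<lambda>t. t + (int p - 1 - t) - c0) (int t) mod int p) = int p * (int p - 1)"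
    by (rule pair_sum[OF p0]) (use c0 in simp)
  have s2: "2 * (\<Sum>t<p. (\<lambda>t. t + 2 * (int p - 1 - t) - 2 * c0) (int t) mod int p) = int p * (int p - 1)"
    by (rule pair_sum[OF p0]) (use c0 in simp)
  have "int (2 * (\<Sum>t<p. sv p t (p - 1 - t))) = 2 * (\<Sum>t<p. int p * ((int t + (int p - 1 - int t) - c0) mod int p)
       + ((int t + 2 * (int p - 1 - int t) - 2 * c0) mod int p) + 1)"
    using p0 by (simp add: sv_int c0_def of_nat_diff)
  also have "\<dots> = int p * (2 * (\<Sum>t<p. (int t + (int p - 1 - int t) - c0) mod int p))
       + 2 * (\<Sum>t<p. (int t + 2 * (int p - 1 - int t) - 2 * c0) mod int p) + 2 * int p"
    by (simp add: sum.distrib sum_distrib_left algebra_simps)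
  also have "\<dots> = int (p * (p^2 + 1))" unfolding s1 s2 by (simp add: algebra_simps power2_eq_square)
  finally show ?thesis by (simp only: of_nat_eq_iff)
qed


lemma sum_split_nat: "(\<Sum>i<a + b. f i) = (\<Sum>i<a. f i) + (\<Sum>i<b. f (a + i))"
  for f :: "nat \<Rightarrow> nat"
  by (induction b) (simp_all add: add.assoc)

lemma sum_if_nat: "k \<le> p \<Longrightarrow> (\<Sum>t<p. (if t < k then x else y)) = k * x + (p - k) * (y::nat)"
proof (induction p)
  case 0
  then show ?case by simp
next
  case (Suc p)
  show ?case
  proof (cases "k = Suc p")
    case True
    then have "(\<Sum>t<Suc p. (if t < k then x else y)) = (\<Sum>t<Suc p. x)" by (intro sum.cong) auto
    then show ?thesis using True by simp
  next
    case False
    then have "k \<le> p" using Suc.prems by simp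
    then show ?thesis using Suc.IH by (simp add: Suc_diff_le)
  qed
qed

lemma sum_entries:
  fixes f :: "nat \<Rightarrow> nat"
  assumes "\<And>t. t < p \<Longrightarrow> f t = s t + c t * N"
  shows "(\<Sum>t<p. f t) = (\<Sum>t<p. s t) + (\<Sum>t<p. c t) * N"
proof -
  have "(\<Sum>t<p. f t) = (\<Sum>t<p. s t + c t * N)" using assms by (intro sum.cong) auto
  then show ?thesis by (simp add: sum.distrib sum_distrib_right)
qed

lemma se_TL: "i \<le> n div 2 \<Longrightarrow> j \<le> n div 2 \<Longrightarrow> singly_even n i j =
   (if (i, j) \<in> swapT n then blockA n 4 i j else blockA n 1 i j)"
  by (simp add: singly_even_def Let_def)

lemma se_TR: "i \<le> n div 2 \<Longrightarrow> \<not> j \<le> n div 2 \<Longrightarrow> singly_even n i j =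
   (if n div 2 - (n - 6) div 4 + 1 \<le> j - n div 2 then blockA n 2 i (j - n div 2) else blockA n 3 i (j - n div 2))"
  by (simp add: singly_even_def Let_def)

lemma se_BL: "\<not> i \<le> n div 2 \<Longrightarrow> j \<le> n div 2 \<Longrightarrow> singly_even n i j =
   (if (i - n div 2, j) \<in> swapT n then blockA n 1 (i - n div 2) j else blockA n 4 (i - n div 2) j)"
  by (simp add: singly_even_def Let_def)

lemma se_BR: "\<not> i \<le> n div 2 \<Longrightarrow> \<not> j \<le> n div 2 \<Longrightarrow> singly_even n i j =
   (if n div 2 - (n - 6) div 4 + 1 \<le> j - n div 2 then blockA n 3 (i - n div 2) (j - n div 2)
    else blockA n 2 (i - n div 2) (j - n div 2))"
  by (simp add: singly_even_def Let_def)

theorem mainTheorem7: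
  fixes n :: nat
  assumes "n \<ge> 6" and "even n" and "\<not> 4 dvd n"
  shows "(\<Sum>i = 1..n. singly_even n i i) = n * (n\<^sup>2 + 1) div 2
       \<and> (\<Sum>i = 1..n. singly_even n i (n - i + 1)) = n * (n\<^sup>2 + 1) div 2"
proof -
  have "n mod 4 = 2" using assms(2,3) by presburger
  then obtain m where nm: "n = 4 * m + 2" by (metis div_mult_mod_eq mult.commute)
  have m1: "m \<ge> 1" using assms(1) nm by simp
  define p where "p = 2 * m + 1"
  have op: "odd p" unfolding p_def by simp
  have hp: "n div 2 = p" unfolding nm p_def by simp
  have hm: "(n - 2) div 4 = m" unfolding nm by simp
  have hq: "(n - 6) div 4 = m - 1" unfolding nm using m1 by (simp add: nat_mult_distrib)
  have hN: "n\<^sup>2 div 4 = p\<^sup>2" unfolding nm p_def by (simp add: power2_eq_square algebra_simps)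
  have np: "n = p + p" unfolding nm p_def by simp
  have bA: "blockA n l i j = siamese p i j + (l - 1) * p\<^sup>2" for l i j
    unfolding blockA_def hp hN ..
  have T: "(i, j) \<in> swapT n \<longleftrightarrow> ((i \<in> {1..m} \<union> {m+2..p}) \<and> j \<in> {1..m}) \<or> (i = m + 1 \<and> j \<in> {m+1..2*m})" for i j
    unfolding swapT_def Let_def hp hm by auto
  have e1: "singly_even n (t+1) (t+1) = sv p t t + (if t < m+1 then 3 else 0) * p\<^sup>2" if "t < p" for t
  proof -
    have "(t+1, t+1) \<in> swapT n \<longleftrightarrow> t < m + 1" unfolding T using that m1 by auto
    then show ?thesis using that siamese_val[OF op that that] se_TL[where n=n and i="t+1" and j="t+1"]
      by (simp add: hp bA)
  qed
  have e2: "singly_even n (p+t+1) (p+t+1) = sv p t t + (if t < m+2 then 1 else 2) * p\<^sup>2" if "t < p" for t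
  proof -
    have "p - (m - 1) + 1 \<le> t + 1 \<longleftrightarrow> \<not> t < m + 2" using m1 unfolding p_def by auto
    moreover have "p + t + 1 - p = t + 1" by simp
    ultimately show ?thesis using that siamese_val[OF op that that] se_BR[where n=n and i="p+t+1" and j="p+t+1"]
      by (simp add: hp hq bA)
  qed
  have e3: "singly_even n (t+1) (n - (t+1) + 1) = sv p t (p - 1 - t) + (if t < m - 1 then 1 else 2) * p\<^sup>2" if "t < p" for t
  proof -
    define J where "J = n - (t+1) + 1"
    have j: "J - p = (p - 1 - t) + 1" "\<not> J \<le> p" using that np unfolding J_def by auto
    have c: "p - (m - 1) + 1 \<le> (p - 1 - t) + 1 \<longleftrightarrow> t < m - 1" using m1 that unfolding p_def by auto
    have t1: "p - 1 - t < p" using that by simp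
    have "singly_even n (t+1) J = (if p - (m - 1) + 1 \<le> (p - 1 - t) + 1 then blockA n 2 (t+1) ((p - 1 - t) + 1)
          else blockA n 3 (t+1) ((p - 1 - t) + 1))"
      using se_TR[where n=n and i="t+1" and j=J] that j unfolding hp hq by simp
    then show ?thesis unfolding J_def[symmetric] c bA siamese_val[OF op that t1] by simp
  qed
  have e4: "singly_even n (p+t+1) (n - (p+t+1) + 1) = sv p t (p - 1 - t) + (if t < m then 3 else 0) * p\<^sup>2" if "t < p" for t
  proof -
    define J where "J = n - (p+t+1) + 1"
    have j: "J = (p - 1 - t) + 1" "J \<le> p" using that np unfolding J_def by auto
    have c: "(t + 1, (p - 1 - t) + 1) \<in> swapT n \<longleftrightarrow> \<not> t < m" unfolding T using that m1 unfolding p_def by auto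
    have t1: "p - 1 - t < p" using that by simp
    have "singly_even n (p+t+1) J = (if (t + 1, (p - 1 - t) + 1) \<in> swapT n then blockA n 1 (t+1) ((p - 1 - t) + 1)
          else blockA n 4 (t+1) ((p - 1 - t) + 1))"
      using se_BL[where n=n and i="p+t+1" and j=J] that j unfolding hp by simp
    then show ?thesis unfolding J_def[symmetric] c bA siamese_val[OF op that t1] by simp
  qed
  have split: "(\<Sum>i = 1..n. f i) = (\<Sum>t<p. f (t+1)) + (\<Sum>t<p. f (p+t+1))" for f :: "nat \<Rightarrow> nat"
  proof -
    have "(\<Sum>i = 1..n. f i) = (\<Sum>t<p+p. f (Suc t))" unfolding np using sum.atLeast1_atMost_eq[of f] by simp
    then show ?thesis by (simp add: sum_split_nat)
  qed
  have goal: "n * (n\<^sup>2 + 1) div 2 = p * (p\<^sup>2 + 1) + 3 * p * p\<^sup>2"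
  proof -
    have "n * (n\<^sup>2 + 1) = 2 * (p * (p\<^sup>2 + 1) + 3 * p * p\<^sup>2)" unfolding np
      by (simp add: power2_eq_square algebra_simps)
    then show ?thesis by simp
  qed
  have c1: "(\<Sum>t<p. (if t < m+1 then 3 else 0::nat)) + (\<Sum>t<p. (if t < m+2 then 1 else 2::nat)) = 3 * p"
  proof -
    have s1: "(\<Sum>t<p. (if t < m+1 then 3 else 0::nat)) = (m+1)*3 + (p-(m+1))*0"
      by (rule sum_if_nat) (simp add: p_def)
    have s2: "(\<Sum>t<p. (if t < m+2 then 1 else 2::nat)) = (m+2)*1 + (p-(m+2))*2"
      by (rule sum_if_nat) (use m1 in \<open>simp add: p_def\<close>)
    show ?thesis unfolding s1 s2 using m1 unfolding p_def by presburger
  qed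
  have c2: "(\<Sum>t<p. (if t < m-1 then 1 else 2::nat)) + (\<Sum>t<p. (if t < m then 3 else 0::nat)) = 3 * p"
    proof -
    have s1: "(\<Sum>t<p. (if t < m-1 then 1 else 2::nat)) = (m-1)*1 + (p-(m-1))*2"
      by (rule sum_if_nat) (simp add: p_def)
    have s2: "(\<Sum>t<p. (if t < m then 3 else 0::nat)) = m*3 + (p-m)*0"
      by (rule sum_if_nat) (simp add: p_def)
    show ?thesis unfolding s1 s2 using m1 unfolding p_def by presburger
  qed
  have D: "(\<Sum>i = 1..n. singly_even n i i) = n * (n\<^sup>2 + 1) div 2"
  proof -
    have "(\<Sum>i = 1..n. singly_even n i i) = ((\<Sum>t<p. sv p t t) + (\<Sum>t<p. (if t < m+1 then 3 else 0)) * p\<^sup>2)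
       + ((\<Sum>t<p. sv p t t) + (\<Sum>t<p. (if t < m+2 then 1 else 2)) * p\<^sup>2)"
      unfolding split[of "\<lambda>i. singly_even n i i"]
      by (simp only: sum_entries[OF e1] sum_entries[OF e2])
    also have "\<dots> = 2 * (\<Sum>t<p. sv p t t) + ((\<Sum>t<p. (if t < m+1 then 3 else 0)) + (\<Sum>t<p. (if t < m+2 then 1 else 2))) * p\<^sup>2"
      by (simp add: algebra_simps)
    also have "\<dots> = n * (n\<^sup>2 + 1) div 2" unfolding c1 sv_diag[OF op] goal by simp
    finally show ?thesis .
  qed
  have A: "(\<Sum>i = 1..n. singly_even n i (n - i + 1)) = n * (n\<^sup>2 + 1) div 2"
  proof -
    have "(\<Sum>i = 1..n. singly_even n i (n - i + 1)) = ((\<Sum>t<p. sv p t (p - 1 - t)) + (\<Sum>t<p. (if t < m-1 then 1 else 2)) * p\<^sup>2)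
       + ((\<Sum>t<p. sv p t (p - 1 - t)) + (\<Sum>t<p. (if t < m then 3 else 0)) * p\<^sup>2)"
      unfolding split[of "\<lambda>i. singly_even n i (n - i + 1)"]
      by (simp only: sum_entries[OF e3] sum_entries[OF e4])
    also have "\<dots> = 2 * (\<Sum>t<p. sv p t (p - 1 - t)) + ((\<Sum>t<p. (if t < m-1 then 1 else 2)) + (\<Sum>t<p. (if t < m then 3 else 0))) * p\<^sup>2"
      by (simp add: algebra_simps)
    also have "\<dots> = n * (n\<^sup>2 + 1) div 2" unfolding c2 sv_anti[OF op] goal by simp
    finally show ?thesis .
  qed
  show ?thesis using D A by simp
qed

end
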